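(* Let $X=(X_1,\dots,X_d)$ be a random vector with values in $\{0,1\}^d$ such that $\mathbb{P}(X=x)>0$ for every $x\in\{0,1\}^d$, and let $G:\{0,1\}^d\to\mathbb{R}$. Suppose there exist a subset $\mathcal{C}\subseteq D:=\{1,\dots,d\}$ with $|\mathcal{C}|<d$ and a function $H:\{0,1\}^{|\mathcal{C}|}\to\mathbb{R}$ such that $G(X)=H(X_{\mathcal{C}})$ almost surely. Write the expansions $$G(X)=\sum_{A\subseteq D}\beta^{(G)}_A e_A(X_A),\qquad H(X_{\mathcal{C}})=\sum_{A\subseteq \mathcal{C}}\beta^{(H)}_A e_A(X_A),$$ where the coefficients are the unique real coefficients for which these identities hold almost surely. Then for every $A\subseteq D$: $\beta^{(G)}_A=\beta^{(H)}_A$ if $A\subseteq\mathcal{C}$, and $\beta^{(G)}_A=0$ if $A\not\subseteq\mathcal{C}$.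
   Context: For $A\subseteq D$, $X_A:=(X_i)_{i\in A}$, $\mathbf{P}_A(x_A):=\mathbb{P}(X_A=x_A)$, and $e_A(X_A):=\dfrac{(-1)^{\sum_{j\in A}X_j}}{\mathbf{P}_A(X_A)}$, with $e_\emptyset(X_\emptyset)=1$. Under the full-support hypothesis, $\{e_A(X_A)\}_{A\subseteq D}$ (resp. $\{e_A(X_A)\}_{A\subseteq\mathcal{C}}$) is a basis of the space of real functions of $X$ (resp. of $X_{\mathcal{C}}$), so the coefficients in the two expansions exist and are unique. *)

theory Defs
  imports "HOL-Probability.Probability"
begin

text \<open>A point of {0,1}^D is a function x :: nat => nat, with x j in {0,1} for j in D
  (values outside D are irrelevant; the law p of X lives on PiE D (\<lambda>_. {0,1})).\<close>

definition cube :: "nat set \<Rightarrow> (nat \<Rightarrow> nat) set" where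
  "cube A = PiE A (\<lambda>_. {0, 1})"

definition marg :: "(nat \<Rightarrow> nat) pmf \<Rightarrow> nat set \<Rightarrow> (nat \<Rightarrow> nat) \<Rightarrow> real" where
  "marg p A x = measure_pmf.prob p {y. \<forall>j\<in>A. y j = x j}"

definition ebasis :: "(nat \<Rightarrow> nat) pmf \<Rightarrow> nat set \<Rightarrow> (nat \<Rightarrow> nat) \<Rightarrow> real" where
  "ebasis p A x = (-1) ^ (\<Sum>j\<in>A. x j) / marg p A x"

end

theory Submission
  imports Defs
begin

lemma ebasis_cong:
  assumes "\<forall>i\<in>B. x i = x' i"
  shows "ebasis p B x = ebasis p B x'"
proof -
  have 1: "(\<Sum>j\<in>B. x j) = (\<Sum>j\<in>B. x' j)" using assms by (intro sum.cong) auto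
  have 2: "{y. \<forall>j\<in>B. y j = x j} = {y. \<forall>j\<in>B. y j = x' j}" using assms by auto
  show ?thesis unfolding ebasis_def marg_def 1 2 ..
qed

lemma marg_pos:
  assumes "pmf p z > 0"
  shows "marg p A z > 0"
proof -
  have "pmf p z = measure_pmf.prob p {z}" by (simp add: measure_pmf_single)
  also have "\<dots> \<le> marg p A z" unfolding marg_def
    by (intro measure_pmf.finite_measure_mono) auto
  finally show ?thesis using assms by linarith
qed

lemma flip_zero:
  assumes fin: "finite A" and jA: "j \<in> A" and jB: "j \<notin> B"
  shows "(\<Sum>y\<in>cube A. (-1::real) ^ (\<Sum>i\<in>A. y i) * ebasis p B (\<lambda>i. if i \<in> A then y i else x0 i)) = 0"
proof -
  define fl where "fl = (\<lambda>y::nat\<Rightarrow>nat. y(j := 1 - y j))"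
  define f where "f = (\<lambda>y. (-1::real) ^ (\<Sum>i\<in>A. y i) * ebasis p B (\<lambda>i. if i \<in> A then y i else x0 i))"
  have flc: "fl y \<in> cube A" if "y \<in> cube A" for y
    using that jA unfolding fl_def cube_def by (auto simp: PiE_iff extensional_def)
  have flfl: "fl (fl y) = y" if "y \<in> cube A" for y
  proof -
    have "y j \<in> {0,1}" using that jA unfolding cube_def by (auto simp: PiE_iff)
    then show ?thesis unfolding fl_def by (auto simp: fun_eq_iff)
  qed
  have fneg: "f (fl y) = - f y" if "y \<in> cube A" for y
  proof -
    have yj: "y j \<in> {0,1}" using that jA unfolding cube_def by (auto simp: PiE_iff)
    have e: "ebasis p B (\<lambda>i. if i \<in> A then fl y i else x0 i) = ebasis p B (\<lambda>i. if i \<in> A then y i else x0 i)"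
      by (rule ebasis_cong) (use jB in \<open>auto simp: fl_def\<close>)
    have s1: "(\<Sum>i\<in>A. y i) = y j + (\<Sum>i\<in>A-{j}. y i)" using fin jA by (simp add: sum.remove)
    have s2: "(\<Sum>i\<in>A. fl y i) = (1 - y j) + (\<Sum>i\<in>A-{j}. y i)" using fin jA
      by (simp add: sum.remove fl_def)
    have "(-1::real) ^ (\<Sum>i\<in>A. fl y i) = - ((-1) ^ (\<Sum>i\<in>A. y i))"
      using yj unfolding s1 s2 by (auto simp: power_add)
    then show ?thesis unfolding f_def e by simp
  qed
  have "sum f (cube A) = sum (f \<circ> fl) (cube A)"
    by (rule sum.reindex_bij_witness[of _ fl fl]) (auto simp: flc flfl)
  also have "\<dots> = - sum f (cube A)" by (simp add: fneg sum_negf[symmetric])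
  finally have "sum f (cube A) = 0" by simp
  then show ?thesis unfolding f_def .
qed

lemma indep:
  assumes fin: "finite D"
    and pos: "\<forall>x\<in>cube D. pmf p x > 0"
    and z: "\<forall>x\<in>cube D. (\<Sum>B\<in>Pow D. c B * ebasis p B x) = 0"
  shows "\<forall>A\<in>Pow D. c A = 0"
proof (rule ccontr)
  assume nt: "\<not> (\<forall>A\<in>Pow D. c A = 0)"
  define S where "S = {A \<in> Pow D. c A \<noteq> 0}"
  have Sne: "S \<noteq> {}" and Sfin: "finite S" using nt fin unfolding S_def by auto
  define m where "m = Max (card ` S)"
  have "m \<in> card ` S" unfolding m_def using Sne Sfin by simp
  then obtain A where AS: "A \<in> S" and cA: "card A = m" by auto
  have maxc: "card B \<le> card A" if "B \<in> S" for B
    unfolding cA m_def using Sfin that by simp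
  have AD: "A \<subseteq> D" and cnz: "c A \<noteq> 0" using AS unfolding S_def by auto
  have finA: "finite A" using AD fin by (rule finite_subset)
  define x0 where "x0 = (\<lambda>j. if j \<in> D then (0::nat) else undefined)"
  define mg where "mg = (\<lambda>y j. if j \<in> A then y j else x0 j)"
  have mgc: "mg y \<in> cube D" if "y \<in> cube A" for y
    using that AD unfolding mg_def x0_def cube_def by (auto simp: PiE_iff extensional_def)
  define Dl where "Dl = (\<Sum>y\<in>cube A. (-1::real) ^ (\<Sum>i\<in>A. y i) * (\<Sum>B\<in>Pow D. c B * ebasis p B (mg y)))"
  have "Dl = 0" unfolding Dl_def using z mgc by simp
  have "Dl = (\<Sum>B\<in>Pow D. c B * (\<Sum>y\<in>cube A. (-1::real) ^ (\<Sum>i\<in>A. y i) * ebasis p B (mg y)))"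
    unfolding Dl_def sum_distrib_left by (subst sum.swap) (simp add: mult.left_commute)
  also have "\<dots> = c A * (\<Sum>y\<in>cube A. (-1::real) ^ (\<Sum>i\<in>A. y i) * ebasis p A (mg y))"
  proof -
    let ?t = "\<lambda>B. c B * (\<Sum>y\<in>cube A. (-1::real) ^ (\<Sum>i\<in>A. y i) * ebasis p B (mg y))"
    have r: "sum ?t (Pow D) = ?t A + sum ?t (Pow D - {A})"
      using fin AD by (intro sum.remove) auto
    have "\<forall>B\<in>Pow D - {A}. ?t B = 0"
    proof
      fix B assume B: "B \<in> Pow D - {A}"
      show "c B * (\<Sum>y\<in>cube A. (-1::real) ^ (\<Sum>i\<in>A. y i) * ebasis p B (mg y)) = 0"
      proof (cases "c B = 0")
        case False
        then have "B \<in> S" using B unfolding S_def by auto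
        then have "card B \<le> card A" by (rule maxc)
        moreover have "finite B" using B fin by (auto intro: finite_subset)
        ultimately have "\<not> A \<subseteq> B" using B by (metis Diff_iff card_seteq singletonI)
        then obtain j where "j \<in> A" "j \<notin> B" by auto
        then show ?thesis unfolding mg_def using flip_zero[OF finA, of j B] by simp
      qed simp
    qed
    then have "sum ?t (Pow D - {A}) = 0" by (intro sum.neutral) blast
    then show ?thesis unfolding r by simp
  qed
  also have "(\<Sum>y\<in>cube A. (-1::real) ^ (\<Sum>i\<in>A. y i) * ebasis p A (mg y)) = (\<Sum>y\<in>cube A. 1 / marg p A (mg y))"
  proof (rule sum.cong[OF refl])
    fix y assume "y \<in> cube A"
    have "(\<Sum>i\<in>A. mg y i) = (\<Sum>i\<in>A. y i)" unfolding mg_def by simp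
    then show "(-1::real) ^ (\<Sum>i\<in>A. y i) * ebasis p A (mg y) = 1 / marg p A (mg y)"
      unfolding ebasis_def by (simp add: power_mult_distrib[symmetric])
  qed
  finally have eq: "c A * (\<Sum>y\<in>cube A. 1 / marg p A (mg y)) = 0" using \<open>Dl = 0\<close> by simp
  have "cube A \<noteq> {}" unfolding cube_def by (simp add: PiE_eq_empty_iff)
  moreover have "finite (cube A)" unfolding cube_def using finA by (simp add: finite_PiE)
  ultimately have "(\<Sum>y\<in>cube A. 1 / marg p A (mg y)) > 0"
    using pos mgc marg_pos by (intro sum_pos) auto
  then show False using eq cnz by simp
qed

theorem corollary2:
  fixes d :: nat
    and p :: "(nat \<Rightarrow> nat) pmf"
    and G :: "(nat \<Rightarrow> nat) \<Rightarrow> real"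
    and C :: "nat set"
    and H :: "(nat \<Rightarrow> nat) \<Rightarrow> real"
    and betaG betaH :: "nat set \<Rightarrow> real"
  assumes range_X: "set_pmf p \<subseteq> cube {1..d}"
    and full_support: "\<forall>x\<in>cube {1..d}. pmf p x > 0"
    and C_sub: "C \<subseteq> {1..d}"
    and C_card: "card C < d"
    and GH: "AE x in measure_pmf p. G x = H (restrict x C)"
    and expG: "AE x in measure_pmf p. G x = (\<Sum>A\<in>Pow {1..d}. betaG A * ebasis p A x)"
    and expH: "AE x in measure_pmf p. H (restrict x C) = (\<Sum>A\<in>Pow C. betaH A * ebasis p A x)"
  shows "\<forall>A. A \<subseteq> {1..d} \<longrightarrow>
           (A \<subseteq> C \<longrightarrow> betaG A = betaH A) \<and> (\<not> A \<subseteq> C \<longrightarrow> betaG A = 0)"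
proof -
  define bH where "bH = (\<lambda>A. if A \<subseteq> C then betaH A else 0)"
  define c where "c = (\<lambda>A. betaG A - bH A)"
  have z: "\<forall>x\<in>cube {1..d}. (\<Sum>B\<in>Pow {1..d}. c B * ebasis p B x) = 0"
  proof
    fix x assume x: "x \<in> cube {1..d}"
    then have xs: "x \<in> set_pmf p" using full_support by (auto simp: set_pmf_iff)
    have g: "G x = (\<Sum>A\<in>Pow {1..d}. betaG A * ebasis p A x)" using expG xs by (simp add: AE_measure_pmf_iff)
    have h: "G x = (\<Sum>A\<in>Pow C. betaH A * ebasis p A x)" using expH GH xs by (simp add: AE_measure_pmf_iff)
    have "(\<Sum>A\<in>Pow C. betaH A * ebasis p A x) = (\<Sum>A\<in>Pow {1..d}. bH A * ebasis p A x)"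
      by (rule sum.mono_neutral_cong_left) (use C_sub in \<open>auto simp: bH_def\<close>)
    then show "(\<Sum>B\<in>Pow {1..d}. c B * ebasis p B x) = 0"
      using g h by (simp add: c_def left_diff_distrib sum_subtractf)
  qed
  have "\<forall>A\<in>Pow {1..d}. c A = 0" by (rule indep[OF _ full_support z]) simp
  then show ?thesis unfolding c_def bH_def by auto
qed

end
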